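(* The smallest constant $\sigma_{2,0}$ such that $\|f-P_2(f)\|_{C^0}\le\sigma_{2,0}\|f'\|_{C^0}$ for all $f\in C^1([-1,1],\mathbb{C})$ equals $$\frac{14\sqrt7-20}{27}\ (\approx0.6311).$$ Equivalently, with the notation below, $\max_{t\in[-1,1],y\in\Omega_2}\max\big(\overline{\varphi}_2(y)(t)-P_2(y)(t),\,P_2(y)(t)-\underline{\varphi}_2(y)(t)\big)=\frac{14\sqrt7-20}{27}$.
   Context: $P_2$ maps a continuous function on $[-1,1]$ to its polynomial interpolant of degree $\le2$ at the Chebyshev points $t_0=1,t_1=0,t_2=-1$; for $y\in\mathbb{R}^3$, $P_2(y)$ is the polynomial of degree $\le2$ with $P_2(y)(t_k)=y_k$. $\|\cdot\|_{C^0}$ is the sup norm on $[-1,1]$. $\Omega_2=\{y\in\mathbb{R}^3:|y_k|\le|t_k|,\ |y_{k+1}-y_k|\le|t_{k+1}-t_k|\}$. For $y\in\Omega_2$ and $t$ between $t_{k^*}$ and $t_{k^*+1}$: $\overline{\varphi}_2(y)(t)=\min\{y_{k^*}+t-t_{k^*},\,y_{k^*+1}-t+t_{k^*+1},\,|t|\}$ and $\underline{\varphi}_2(y)(t)=\max\{y_{k^*}-t+t_{k^*},\,y_{k^*+1}+t-t_{k^*+1},\,-|t|\}$. *)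

theory Defs
  imports "HOL-Analysis.Analysis"
begin

definition cheb2 :: "nat \<Rightarrow> real" where
  "cheb2 k = (if k = 0 then 1 else if k = 1 then 0 else -1)"

definition P2 :: "(real \<Rightarrow> complex) \<Rightarrow> real \<Rightarrow> complex" where
  "P2 f t = (\<Sum>k<3. f (cheb2 k) *
      complex_of_real (\<Prod>j\<in>{..<3} - {k}. (t - cheb2 j) / (cheb2 k - cheb2 j)))"

definition sup_norm :: "(real \<Rightarrow> complex) \<Rightarrow> real" where
  "sup_norm g = (SUP t\<in>{-1..1}. norm (g t))"

definition C1_on_interval :: "(real \<Rightarrow> complex) \<Rightarrow> (real \<Rightarrow> complex) \<Rightarrow> bool" where
  "C1_on_interval f f' \<longleftrightarrow>
     (\<forall>t\<in>{-1..1}. (f has_vector_derivative f' t) (at t within {-1..1})) \<and>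
     continuous_on {-1..1} f'"

end

theory Submission
  imports Defs
begin

lemma P2_eq: "P2 f t = f 1 * of_real (t*(t+1)/2) + f 0 * of_real (1 - t^2) + f (-1) * of_real (t*(t-1)/2)"
proof -
  have A: "{..<3::nat} = {0,1,2}" by auto
  have "{..<3::nat} - {0} = {1,2}" "{..<3::nat} - {1} = {0,2}" "{..<3::nat} - {2} = {0,1}" by auto
  then show ?thesis unfolding P2_def A
    by (simp add: cheb2_def power2_eq_square field_simps)
qed

lemma bdd: assumes "continuous_on {-1..1} g" shows "bdd_above ((\<lambda>t. norm (g t::complex)) ` {-1..1::real})"
proof -
  have "compact ((\<lambda>t. norm (g t)) ` {-1..1::real})"
    by (intro compact_continuous_image continuous_on_norm assms) simp
  then show ?thesis by (simp add: bounded_imp_bdd_above compact_imp_bounded)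
qed

lemma mvt: assumes "\<forall>s\<in>{-1..1}. (f has_vector_derivative f' s) (at s within {-1..1})"
  "x\<in>{-1..1}" "y\<in>{-1..1::real}" "\<forall>s\<in>{-1..1}. norm (f' s :: complex) \<le> M"
shows "norm (f x - f y) \<le> M * \<bar>x - y\<bar>"
proof -
  have "norm (f x - f y) \<le> M * norm (x - y)"
  proof (rule differentiable_bound[of "{-1..1}" f "\<lambda>s h. h *\<^sub>R f' s" M x y])
    show "convex {-1..1::real}" by simp
    show "(f has_derivative (\<lambda>h. h *\<^sub>R f' s)) (at s within {-1..1})" if "s \<in> {-1..1}" for s
      using assms(1) that by (simp add: has_vector_derivative_def)
    show "onorm (\<lambda>h. h *\<^sub>R f' s) \<le> M" if "s \<in> {-1..1}" for s
      using onorm_scaleR_left[OF bounded_linear_ident, of "f' s"] onorm_id[where 'a=real] assms(4) that by simp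
  qed (use assms in auto)
  then show ?thesis by simp
qed

lemma poly: fixes t::real assumes "0 \<le> t" shows "2*t - t^2 - t^3 \<le> (14 * sqrt 7 - 20) / 27"
proof -
  define r where "r = sqrt 7"
  have r2: "r^2 = 7" unfolding r_def by simp
  have r0: "r \<ge> 1" unfolding r_def by (simp add: real_le_rsqrt)
  have id: "(14 * r - 20) / 27 - (2*t - t^2 - t^3) = (t - (r-1)/3)^2 * (t + 1 + 2*((r-1)/3))"
    proof - have rr: "r*r = 7" using r2 by (simp add: power2_eq_square) show ?thesis by (simp add: field_simps power2_eq_square power3_eq_cube) (simp add: algebra_simps rr flip: mult.assoc) qed
  have "(t - (r-1)/3)^2 * (t + 1 + 2*((r-1)/3)) \<ge> 0" using assms r0 by (intro mult_nonneg_nonneg) auto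
  then have "(14 * r - 20) / 27 - (2*t - t^2 - t^3) \<ge> 0" using id by simp
  then show ?thesis unfolding r_def by simp
qed
lemma tri3: fixes a b c :: complex and \<alpha> \<beta> \<gamma> :: real
  assumes "\<alpha> \<ge> 0" "\<beta> \<ge> 0" "\<gamma> \<ge> 0" "norm a \<le> A" "norm b \<le> B" "norm c \<le> C"
  shows "norm (of_real \<alpha> * a - of_real \<beta> * b - of_real \<gamma> * c) \<le> \<alpha>*A + \<beta>*B + \<gamma>*C"
proof -
  have "norm (of_real \<alpha> * a - of_real \<beta> * b - of_real \<gamma> * c) \<le> norm (of_real \<alpha> * a) + norm (of_real \<beta> * b) + norm (of_real \<gamma> * c)"
    by (smt (verit) norm_triangle_ineq4)
  also have "\<dots> = \<alpha> * norm a + \<beta> * norm b + \<gamma> * norm c" using assms by (simp add: norm_mult)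
  also have "\<dots> \<le> \<alpha>*A + \<beta>*B + \<gamma>*C" using assms by (intro add_mono mult_left_mono) auto
  finally show ?thesis .
qed

lemma pt: assumes "\<forall>s\<in>{-1..1}. (f has_vector_derivative f' s) (at s within {-1..1})"
  "t\<in>{-1..1::real}" "\<forall>s\<in>{-1..1}. norm (f' s :: complex) \<le> M"
  shows "norm (f t - P2 f t) \<le> (14 * sqrt 7 - 20) / 27 * M"
proof -
  have M0: "M \<ge> 0" proof -
    have "norm (f' 0) \<le> M" using assms(3) by simp
    then show ?thesis using norm_ge_zero order_trans by blast
  qed
  have L: "norm (f x - f y) \<le> M * \<bar>x - y\<bar>" if "x\<in>{-1..1}" "y\<in>{-1..1}" for x y
    using mvt[OF assms(1) that assms(3)] .
  show ?thesis
  proof (cases "t \<ge> 0")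
    case True
    have e: "f t - P2 f t = of_real (1 - t*(t+1)/2) * (f t - f 0) - of_real (t*(t+1)/2) * (f 1 - f t)
       - of_real (t*(1-t)/2) * (f 0 - f (-1))"
      unfolding P2_eq
      apply (simp only: of_real_mult of_real_add of_real_diff of_real_divide of_real_power of_real_1 of_real_numeral)
      apply (simp add: field_simps)
      by algebra
    have "norm (f t - P2 f t) \<le> (1 - t*(t+1)/2) * (M*t) + (t*(t+1)/2) * (M*(1-t)) + (t*(1-t)/2) * M"
      unfolding e
    proof (rule tri3)
      have "t*(t+1) \<le> 1*2" using assms(2) True by (intro mult_mono) auto
      then show "0 \<le> 1 - t * (t + 1) / 2" by simp
      show "0 \<le> t * (t + 1) / 2" using True by simp
      show "0 \<le> t * (1 - t) / 2" using True assms(2) by simp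
      show "norm (f t - f 0) \<le> M*t" using L[of t 0] assms(2) True by auto
      show "norm (f 1 - f t) \<le> M*(1-t)" using L[of 1 t] assms(2) True by auto
      show "norm (f 0 - f (-1)) \<le> M" using L[of 0 "-1"] by auto
    qed
    also have "\<dots> = M * (2*t - t^2 - t^3)" by (simp add: field_simps power2_eq_square power3_eq_cube)
    also have "\<dots> \<le> M * ((14 * sqrt 7 - 20) / 27)" using poly[OF True] M0 by (rule mult_left_mono)
    finally show ?thesis by (simp add: mult.commute)
  next
    case False
    define s where "s = -t"
    have s0: "s \<ge> 0" "s \<le> 1" using False assms(2) s_def by auto
    have e: "f t - P2 f t = of_real (1 - s*(s+1)/2) * (f t - f 0) - of_real (s*(s+1)/2) * (f (-1) - f t)
       - of_real (s*(1-s)/2) * (f 0 - f 1)"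
      unfolding P2_eq s_def
      apply (simp only: of_real_mult of_real_add of_real_diff of_real_divide of_real_power of_real_1 of_real_numeral)
      apply (simp add: field_simps)
      by algebra
    have "norm (f t - P2 f t) \<le> (1 - s*(s+1)/2) * (M * s) + (s*(s+1)/2) * (M*(1-s)) + (s*(1-s)/2) * M"
      unfolding e
    proof (rule tri3)
      have "s*(s+1) \<le> 1*2" using s0 by (intro mult_mono) auto
      then show "0 \<le> 1 - s * (s + 1) / 2" by simp
      show "0 \<le> s * (s + 1) / 2" using s0 by simp
      show "0 \<le> s * (1 - s) / 2" using s0 by simp
      show "norm (f t - f 0) \<le> M * s" using L[of t 0] assms(2) s_def s0 by auto
      show "norm (f (-1) - f t) \<le> M*(1-s)" using L[of "-1" t] assms(2) s_def s0 by (auto simp: add.commute)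
      show "norm (f 0 - f 1) \<le> M" using L[of 0 "1"] by auto
    qed
    also have "\<dots> = M * (2* s - s^2 - s^3)" by (simp add: field_simps power2_eq_square power3_eq_cube)
    also have "\<dots> \<le> M * ((14 * sqrt 7 - 20) / 27)" using poly[OF s0(1)] M0 by (rule mult_left_mono)
    finally show ?thesis by (simp add: mult.commute)
  qed
qed
lemma polyid: fixes t::real
  shows "(14 * sqrt 7 - 20) / 27 - (2*t - t^2 - t^3) = (t - (sqrt 7 - 1)/3)^2 * (t + 1 + 2*((sqrt 7 - 1)/3))"
proof -
  define r where "r = sqrt 7"
  have rr: "r*r = 7" unfolding r_def by simp
  have "(14 * r - 20) / 27 - (2*t - t^2 - t^3) = (t - (r-1)/3)^2 * (t + 1 + 2*((r-1)/3))"
    by (simp add: field_simps power2_eq_square power3_eq_cube) (simp add: algebra_simps rr flip: mult.assoc)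
  then show ?thesis unfolding r_def .
qed

lemma phi_deriv: assumes "(e::real) > 0"
  shows "((\<lambda>x. sqrt (x^2 + e^2)) has_real_derivative x / sqrt (x^2 + e^2)) (at x)"
proof -
  have p: "x^2 + e^2 > 0" using assms by (simp add: add_nonneg_pos)
  have d1: "((\<lambda>x. x^2 + e^2) has_real_derivative 2*x) (at x)"
    proof -
    have a: "((\<lambda>x. x^2) has_real_derivative (real 2 * x^(2 - Suc 0))) (at x)" by (rule DERIV_pow)
    have b: "((\<lambda>x. e^2) has_real_derivative 0) (at x)" by (rule DERIV_const)
    show ?thesis using DERIV_add[OF a b] by simp
  qed
  have "((\<lambda>x. sqrt (x^2+e^2)) has_real_derivative inverse (sqrt (x^2+e^2))/2 * (2*x)) (at x)"
    by (rule DERIV_chain2[OF DERIV_real_sqrt[OF p] d1])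
  moreover have "inverse (sqrt (x^2+e^2))/2 * (2*x) = x / sqrt (x^2 + e^2)" by (simp add: field_simps)
  ultimately show ?thesis by simp
qed

lemma phi_pos: "(e::real) > 0 \<Longrightarrow> sqrt (x^2 + e^2) > 0"
  by (simp add: add_nonneg_pos)

lemma phi_abs: assumes "(e::real) > 0" shows "\<bar>x / sqrt (x^2 + e^2)\<bar> \<le> 1"
proof -
  have "\<bar>x\<bar> = sqrt (x^2)" by simp
  also have "\<dots> \<le> sqrt (x^2 + e^2)" by simp
  finally show ?thesis using phi_pos[OF assms, of x] by (simp add: abs_div divide_le_eq_1)
qed

lemma phi_close: assumes "(e::real) > 0" shows "0 \<le> sqrt (x^2 + e^2) - \<bar>x\<bar>" "sqrt (x^2 + e^2) - \<bar>x\<bar> \<le> e"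
proof -
  have "\<bar>x\<bar> = sqrt (x^2)" by simp
  also have "\<dots> \<le> sqrt (x^2 + e^2)" by simp
  finally show "0 \<le> sqrt (x^2 + e^2) - \<bar>x\<bar>" by simp
  have "x^2 + e^2 \<le> (\<bar>x\<bar> + e)^2" using assms by (simp add: power2_eq_square algebra_simps)
  then have "sqrt (x^2 + e^2) \<le> sqrt ((\<bar>x\<bar> + e)^2)" by (rule real_sqrt_le_mono)
  then show "sqrt (x^2 + e^2) - \<bar>x\<bar> \<le> e" using assms by simp
qed

lemma phi_mono_pos: assumes "(e::real) > 0" "0 \<le> x" "x \<le> y"
  shows "x / sqrt (x^2 + e^2) \<le> y / sqrt (y^2 + e^2)"
proof -
  have x2: "x^2 \<le> y^2" using assms by (intro power_mono) auto
  have "x^2 * (y^2 + e^2) \<le> y^2 * (x^2 + e^2)" using x2 mult_right_mono[OF x2, of "e^2"] by (simp add: algebra_simps)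
  then have "sqrt (x^2 * (y^2 + e^2)) \<le> sqrt (y^2 * (x^2 + e^2))" by (rule real_sqrt_le_mono)
  then have "x * sqrt (y^2 + e^2) \<le> y * sqrt (x^2 + e^2)" using assms by (simp add: real_sqrt_mult)
  then show ?thesis using phi_pos[OF assms(1), of x] phi_pos[OF assms(1), of y] by (simp add: divide_le_eq le_divide_eq mult.commute)
qed

lemma phi_mono: assumes "(e::real) > 0" "x \<le> y"
  shows "x / sqrt (x^2 + e^2) \<le> y / sqrt (y^2 + e^2)"
proof (cases "0 \<le> x")
  case True then show ?thesis using phi_mono_pos assms by blast
next
  case False
  show ?thesis
  proof (cases "0 \<le> y")
    case True
    then show ?thesis using False phi_pos[OF assms(1)]
      by (smt (verit) divide_nonneg_pos divide_neg_pos)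
  next
    case False
    have "(-y) / sqrt ((-y)^2 + e^2) \<le> (-x) / sqrt ((-x)^2 + e^2)"
      using False assms by (intro phi_mono_pos) auto
    then show ?thesis by simp
  qed
qed
lemma prod_bound: fixes D w e :: real assumes "\<bar>D\<bar> \<le> e" "\<bar>w\<bar> \<le> 1" shows "\<bar>D * w\<bar> \<le> e"
proof -
  have "\<bar>D * w\<bar> = \<bar>D\<bar> * \<bar>w\<bar>" by (rule abs_mult)
  also have "\<dots> \<le> e * 1" using assms by (intro mult_mono) auto
  finally show ?thesis by simp
qed

lemma contE: assumes "C1_on_interval f f'" shows "continuous_on {-1..1} (\<lambda>t. f t - P2 f t)"
proof -
  have cf: "continuous_on {-1..1} f"
    unfolding continuous_on_eq_continuous_within
    using assms has_vector_derivative_continuous unfolding C1_on_interval_def by blast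
  have cP: "continuous_on {-1..1} (\<lambda>t. P2 f t)"
    unfolding P2_eq by (intro continuous_on_add continuous_on_mult continuous_on_const continuous_on_of_real continuous_on_id continuous_on_divide continuous_on_diff continuous_on_power) auto
  show ?thesis by (intro continuous_on_diff cf cP)
qed

lemma lower: assumes e: "(e::real) > 0"
  shows "\<exists>f f'. C1_on_interval f f' \<and> 0 \<le> sup_norm f' \<and> sup_norm f' \<le> 1 \<and>
     (14 * sqrt 7 - 20) / 27 - 8 * e \<le> sup_norm (\<lambda>t. f t - P2 f t)"
proof -
  define t0 where "t0 = (sqrt 7 - 1) / 3"
  have s7: "2 < sqrt 7" "sqrt 7 < 4"
    using real_sqrt_less_mono[of 4 7] real_sqrt_less_mono[of 7 16] by auto
  have t0b: "0 < t0" "t0 < 1" unfolding t0_def using s7 by auto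
  define \<phi> where "\<phi> x = sqrt (x^2 + e^2)" for x
  define u where "u x = x / sqrt (x^2 + e^2)" for x
  define g where "g s = \<phi> s - \<phi> (s - t0) - s + t0" for s
  define g' where "g' s = u s - u (s - t0) - 1" for s
  define f where "f = (\<lambda>s. complex_of_real (g s))"
  define f' where "f' = (\<lambda>s. complex_of_real (g' s))"
  have ne: "sqrt (x^2 + e^2) \<noteq> 0" for x using phi_pos[OF e, of x] by linarith
  have dg: "(g has_real_derivative g' s) (at s)" for s
  proof -
    have d1: "(\<phi> has_real_derivative u s) (at s)" unfolding \<phi>_def u_def by (rule phi_deriv[OF e])
    have d2: "(\<phi> has_real_derivative u (s - t0)) (at (s - t0))" unfolding \<phi>_def u_def by (rule phi_deriv[OF e])
    have d3: "((\<lambda>s. s - t0) has_real_derivative 1 - 0) (at s)" by (intro DERIV_diff DERIV_ident DERIV_const)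
    have d4: "((\<lambda>s. \<phi> (s - t0)) has_real_derivative u (s - t0) * (1 - 0)) (at s)"
      by (rule DERIV_chain2[OF d2 d3])
    have "((\<lambda>s. \<phi> s - \<phi> (s - t0) - s + t0) has_real_derivative u s - u (s - t0) * (1 - 0) - 1 + 0) (at s)"
      by (intro DERIV_add DERIV_diff d1 d4 DERIV_ident DERIV_const)
    then show ?thesis unfolding g_def[abs_def] g'_def by simp
  qed
  have C1: "C1_on_interval f f'"
    unfolding C1_on_interval_def
  proof
    show "\<forall>t\<in>{-1..1}. (f has_vector_derivative f' t) (at t within {-1..1})"
      unfolding f_def f'_def using has_vector_derivative_at_within has_vector_derivative_of_real[OF dg] by blast
    show "continuous_on {-1..1} f'"
      unfolding f'_def g'_def u_def
      by (intro continuous_on_of_real continuous_on_diff continuous_on_divide continuous_on_add continuous_on_real_sqrt continuous_on_power continuous_on_id continuous_on_const ballI ne)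
  qed
  have g'b: "\<bar>g' s\<bar> \<le> 1" for s
  proof -
    have "u (s - t0) \<le> u s" unfolding u_def using t0b by (intro phi_mono[OF e]) simp
    moreover have "\<bar>u s\<bar> \<le> 1" "\<bar>u (s - t0)\<bar> \<le> 1" unfolding u_def by (rule phi_abs[OF e])+
    ultimately show ?thesis unfolding g'_def by linarith
  qed
  have bf': "bdd_above ((\<lambda>t. norm (f' t)) ` {-1..1})"
    by (rule bdd) (use C1 in \<open>simp add: C1_on_interval_def\<close>)
  have n1: "sup_norm f' \<le> 1"
    unfolding sup_norm_def by (rule cSUP_least) (use g'b in \<open>auto simp: f'_def\<close>)
  have n0: "0 \<le> sup_norm f'"
    unfolding sup_norm_def by (rule cSUP_upper2[OF bf', of 0]) auto
  have contf: "continuous_on {-1..1} (\<lambda>t. f t - P2 f t)"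
    by (rule contE[OF C1])
  have bE: "bdd_above ((\<lambda>t. norm (f t - P2 f t)) ` {-1..1})" by (rule bdd[OF contf])
  define w1 where "w1 = t0*(t0+1)/2"
  define w0 where "w0 = 1 - t0^2"
  define wm where "wm = t0*(t0-1)/2"
  define Er where "Er = g t0 - (g 1 * w1 + g 0 * w0 + g (-1) * wm)"
  have fE: "f t0 - P2 f t0 = complex_of_real Er"
    unfolding P2_eq f_def Er_def w1_def w0_def wm_def by simp
  define d where "d x = \<phi> x - \<bar>x\<bar>" for x
  have db: "0 \<le> d x" "d x \<le> e" for x unfolding d_def \<phi>_def using phi_close[OF e] by auto
  have gt0: "g t0 = t0 + (d t0 - d 0)" unfolding g_def d_def using t0b by simp
  have g1: "g 1 = 2*t0 - 1 + (d 1 - d (1 - t0))" unfolding g_def d_def using t0b by simp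
  have g0: "g 0 = d 0 - d (-t0)" unfolding g_def d_def using t0b by simp
  have gm: "g (-1) = 1 + (d (-1) - d (-1 - t0))" unfolding g_def d_def using t0b by simp
  have wb: "\<bar>w1\<bar> \<le> 1" "\<bar>w0\<bar> \<le> 1" "\<bar>wm\<bar> \<le> 1"
  proof -
    have "t0*(t0+1) \<le> 1*2" using t0b by (intro mult_mono) auto
    then show "\<bar>w1\<bar> \<le> 1" unfolding w1_def using t0b by simp
    have "t0^2 \<le> 1" using t0b by (simp add: power_le_one)
    then show "\<bar>w0\<bar> \<le> 1" unfolding w0_def using t0b by simp
    have "t0*(1-t0) \<le> 1*1" using t0b by (intro mult_mono) auto
    then show "\<bar>wm\<bar> \<le> 1" unfolding wm_def using t0b by (simp add: abs_if algebra_simps)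
  qed
  have p1: "\<bar>(d 1 - d (1 - t0)) * w1\<bar> \<le> e" using db[of 1] db[of "1-t0"] wb by (intro prod_bound) auto
  have p0: "\<bar>(d 0 - d (-t0)) * w0\<bar> \<le> e" using db[of 0] db[of "-t0"] wb by (intro prod_bound) auto
  have pm: "\<bar>(d (-1) - d (-1 - t0)) * wm\<bar> \<le> e" using db[of "-1"] db[of "-1-t0"] wb by (intro prod_bound) auto
  have main: "t0 - ((2*t0 - 1) * w1 + wm) = (14 * sqrt 7 - 20) / 27"
  proof -
    have "t0 - ((2*t0 - 1) * w1 + wm) = 2*t0 - t0^2 - t0^3"
      unfolding w1_def wm_def by (simp add: field_simps power2_eq_square power3_eq_cube)
    also have "\<dots> = (14 * sqrt 7 - 20) / 27" using polyid[of t0] unfolding t0_def by simp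
    finally show ?thesis .
  qed
  have Erx: "Er = (t0 - ((2*t0 - 1) * w1 + wm)) + (d t0 - d 0) - (d 1 - d (1 - t0)) * w1
      - (d 0 - d (-t0)) * w0 - (d (-1) - d (-1 - t0)) * wm"
    unfolding Er_def gt0 g1 g0 gm by (simp add: algebra_simps)
  have "(14 * sqrt 7 - 20) / 27 - 8 * e \<le> Er"
    using Erx main p1 p0 pm db[of t0] db[of 0] e by linarith
  also have "\<dots> \<le> norm (f t0 - P2 f t0)" unfolding fE by simp
  also have "\<dots> \<le> sup_norm (\<lambda>t. f t - P2 f t)"
    unfolding sup_norm_def by (rule cSUP_upper[OF _ bE]) (use t0b in auto)
  finally show ?thesis using C1 n0 n1 by blast
qed
theorem theoremB5:
  defines "S \<equiv> {\<sigma>::real. \<forall>f f'. C1_on_interval f f' \<longrightarrow>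
            sup_norm (\<lambda>t. f t - P2 f t) \<le> \<sigma> * sup_norm f'}"
  shows "(14 * sqrt 7 - 20) / 27 \<in> S \<and> (\<forall>\<sigma>\<in>S. (14 * sqrt 7 - 20) / 27 \<le> \<sigma>)"
proof
  define c where "c = (14 * sqrt 7 - 20) / 27"
  have s7: "2 < sqrt 7" using real_sqrt_less_mono[of 4 7] by auto
  have c0: "c > 0" unfolding c_def using s7 by simp
  show "(14 * sqrt 7 - 20) / 27 \<in> S"
    unfolding S_def
  proof (intro CollectI allI impI)
    fix f f' assume C1: "C1_on_interval f f'"
    have bf': "bdd_above ((\<lambda>t. norm (f' t)) ` {-1..1})"
      by (rule bdd) (use C1 in \<open>simp add: C1_on_interval_def\<close>)
    have Mb: "\<forall>s\<in>{-1..1}. norm (f' s) \<le> sup_norm f'"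
      unfolding sup_norm_def using bf' by (auto intro: cSUP_upper)
    have D: "\<forall>s\<in>{-1..1}. (f has_vector_derivative f' s) (at s within {-1..1})"
      using C1 unfolding C1_on_interval_def by blast
    show "sup_norm (\<lambda>t. f t - P2 f t) \<le> (14 * sqrt 7 - 20) / 27 * sup_norm f'"
      unfolding sup_norm_def[of "\<lambda>t. f t - P2 f t"]
      by (rule cSUP_least) (use pt[OF D _ Mb] in auto)
  qed
  show "\<forall>\<sigma>\<in>S. (14 * sqrt 7 - 20) / 27 \<le> \<sigma>"
  proof
    fix \<sigma> assume sS: "\<sigma> \<in> S"
    show "(14 * sqrt 7 - 20) / 27 \<le> \<sigma>"
    proof (rule ccontr)
      assume nle: "\<not> (14 * sqrt 7 - 20) / 27 \<le> \<sigma>"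
      define m where "m = max \<sigma> 0"
      have mc: "m < c" unfolding m_def c_def using nle c0 c_def by auto
      define \<epsilon> where "\<epsilon> = (c - m) / 16"
      have \<epsilon>0: "\<epsilon> > 0" unfolding \<epsilon>_def using mc by simp
      obtain f f' where ff: "C1_on_interval f f'" "0 \<le> sup_norm f'" "sup_norm f' \<le> 1"
        "(14 * sqrt 7 - 20) / 27 - 8 * \<epsilon> \<le> sup_norm (\<lambda>t. f t - P2 f t)"
        using lower[OF \<epsilon>0] by blast
      have "sup_norm (\<lambda>t. f t - P2 f t) \<le> \<sigma> * sup_norm f'" using sS ff(1) unfolding S_def by blast
      also have "\<dots> \<le> m"
      proof (cases "\<sigma> \<ge> 0")
        case True
        then have "\<sigma> * sup_norm f' \<le> \<sigma> * 1" using ff(3) by (intro mult_left_mono)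
        then show ?thesis unfolding m_def by simp
      next
        case False
        then have "\<sigma> * sup_norm f' \<le> 0" using ff(2) by (simp add: mult_nonpos_nonneg)
        then show ?thesis unfolding m_def by simp
      qed
      finally have "c - 8 * \<epsilon> \<le> m" using ff(4) unfolding c_def by linarith
      moreover have "8 * \<epsilon> = (c - m) / 2" unfolding \<epsilon>_def by simp
      ultimately show False using mc by argo
    qed
  qed
qed

end
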